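(* Let $A=[a_{ij}]$ be a symmetric $n\times n$ real matrix all of whose entries (including diagonal entries) lie in $\{1,-1\}$, and let $E(x_1,\dots,x_n)=\sum_{i=1}^n a_{ii}x_i^2+2\sum_{i<j}a_{ij}x_ix_j$. Then $E(x_1,\dots,x_n)\ge 0$ for all $(x_1,\dots,x_n)\in\mathbb{R}^n$ if and only if there exist $b_1,\dots,b_n\in\{1,-1\}$ such that $E(x_1,\dots,x_n)=(b_1x_1+b_2x_2+\dots+b_nx_n)^2$ for all $(x_1,\dots,x_n)\in\mathbb{R}^n$. *)

theory Defs
  imports Main "HOL.Real"
begin

definition quadE :: "nat \<Rightarrow> (nat \<Rightarrow> nat \<Rightarrow> real) \<Rightarrow> (nat \<Rightarrow> real) \<Rightarrow> real" where
  "quadE n A x = (\<Sum>i=1..n. A i i * (x i)\<^sup>2)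
     + 2 * (\<Sum>i=1..n. \<Sum>j=1..n. if i < j then A i j * x i * x j else 0)"

end

theory Submission
  imports Defs
begin

lemma quadE_full:
  assumes sym: "\<forall>i\<in>{1..n}. \<forall>j\<in>{1..n}. A i j = A j i"
  shows "quadE n A x = (\<Sum>i\<in>{1..n}. \<Sum>j\<in>{1..n}. A i j * x i * x j)"
proof -
  let ?f = "\<lambda>i j. A i j * x i * x j"
  have split: "?f i j = (if i < j then ?f i j else 0) + (if j < i then ?f i j else 0)
       + (if i = j then ?f i j else 0)" for i j by auto
  have "(\<Sum>i\<in>{1..n}. \<Sum>j\<in>{1..n}. ?f i j) =
     (\<Sum>i\<in>{1..n}. \<Sum>j\<in>{1..n}. if i < j then ?f i j else 0)
   + (\<Sum>i\<in>{1..n}. \<Sum>j\<in>{1..n}. if j < i then ?f i j else 0)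
   + (\<Sum>i\<in>{1..n}. \<Sum>j\<in>{1..n}. if i = j then ?f i j else 0)"
    by (subst split) (simp add: sum.distrib)
  also have "(\<Sum>i\<in>{1..n}. \<Sum>j\<in>{1..n}. if j < i then ?f i j else 0)
      = (\<Sum>j\<in>{1..n}. \<Sum>i\<in>{1..n}. if j < i then ?f i j else 0)"
    by (rule sum.swap)
  also have "\<dots> = (\<Sum>i\<in>{1..n}. \<Sum>j\<in>{1..n}. if i < j then ?f i j else 0)"
    using sym by (intro sum.cong refl) (auto simp: mult_ac)
  also have "(\<Sum>i\<in>{1..n}. \<Sum>j\<in>{1..n}. if i = j then ?f i j else 0) = (\<Sum>i=1..n. A i i * (x i)\<^sup>2)"
    by (simp add: power2_eq_square mult_ac)
  finally show ?thesis unfolding quadE_def by simp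
qed

lemma restrict_sum:
  fixes n :: nat and x :: "nat \<Rightarrow> real" and A :: "nat \<Rightarrow> nat \<Rightarrow> real"
  assumes "S \<subseteq> {1..n}" "\<forall>k. k \<notin> S \<longrightarrow> x k = 0"
  shows "(\<Sum>i\<in>{1..n}. \<Sum>j\<in>{1..n}. A i j * x i * x j) = (\<Sum>i\<in>S. \<Sum>j\<in>S. A i j * x i * x j)"
proof -
  have "(\<Sum>i\<in>{1..n}. \<Sum>j\<in>{1..n}. A i j * x i * x j) = (\<Sum>i\<in>{1..n}. \<Sum>j\<in>S. A i j * x i * x j)"
  proof (rule sum.cong[OF refl])
    fix i assume "i \<in> {1..n}"
    show "(\<Sum>j\<in>{1..n}. A i j * x i * x j) = (\<Sum>j\<in>S. A i j * x i * x j)"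
      using assms by (intro sum.mono_neutral_right) (simp_all add: finite_subset[OF assms(1)])
  qed
  also have "\<dots> = (\<Sum>i\<in>S. \<Sum>j\<in>S. A i j * x i * x j)"
    using assms by (intro sum.mono_neutral_right) (simp_all add: finite_subset[OF assms(1)])
  finally show ?thesis .
qed

theorem mainTheorem3:
  fixes n :: nat and A :: "nat \<Rightarrow> nat \<Rightarrow> real"
  assumes sym: "\<forall>i\<in>{1..n}. \<forall>j\<in>{1..n}. A i j = A j i"
    and entries: "\<forall>i\<in>{1..n}. \<forall>j\<in>{1..n}. A i j \<in> {1, -1}"
  shows "(\<forall>x :: nat \<Rightarrow> real. quadE n A x \<ge> 0) \<longleftrightarrow>
         (\<exists>b :: nat \<Rightarrow> real. (\<forall>i\<in>{1..n}. b i \<in> {1, -1}) \<and>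
            (\<forall>x :: nat \<Rightarrow> real. quadE n A x = (\<Sum>i=1..n. b i * x i)\<^sup>2))"
proof
  assume "\<exists>b :: nat \<Rightarrow> real. (\<forall>i\<in>{1..n}. b i \<in> {1, -1}) \<and>
            (\<forall>x :: nat \<Rightarrow> real. quadE n A x = (\<Sum>i=1..n. b i * x i)\<^sup>2)"
  then show "\<forall>x :: nat \<Rightarrow> real. quadE n A x \<ge> 0" by auto
next
  assume psd: "\<forall>x :: nat \<Rightarrow> real. quadE n A x \<ge> 0"
  have Q: "0 \<le> (\<Sum>i\<in>{1..n}. \<Sum>j\<in>{1..n}. A i j * x i * x j)" for x
    using psd quadE_full[OF sym] by metis
  have diag: "A i i = 1" if i: "i \<in> {1..n}" for i
  proof -
    define x where "x = (\<lambda>k. if k = i then (1::real) else 0)"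
    have "0 \<le> (\<Sum>k\<in>{i}. \<Sum>l\<in>{i}. A k l * x k * x l)"
      using Q[of x] restrict_sum[of "{i}" n x A] i by (auto simp: x_def)
    then have "A i i \<ge> 0" by (simp add: x_def)
    then show ?thesis using entries i by force
  qed
  have tri: "A i j = A 1 i * A 1 j" if i: "i \<in> {1..n}" and j: "j \<in> {1..n}"
    and d: "i \<noteq> 1" "j \<noteq> 1" "i \<noteq> j" for i j
  proof (rule ccontr)
    assume ne: "A i j \<noteq> A 1 i * A 1 j"
    have one: "1 \<in> {1..n}" using i by auto
    define a where "a = A 1 i"
    define b where "b = A 1 j"
    define x where "x = (\<lambda>k. if k = 1 then (1::real) else if k = i then - a else if k = j then - b else 0)"
    have le0: "0 \<le> (\<Sum>k\<in>{1,i,j}. \<Sum>l\<in>{1,i,j}. A k l * x k * x l)"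
      using Q[of x] restrict_sum[of "{1,i,j}" n x A] i j one by (auto simp: x_def)
    have ab: "a \<in> {1,-1}" "b \<in> {1,-1}" "A i j \<in> {1,-1}"
      using entries i j one by (auto simp: a_def b_def)
    have aa: "a * a = 1" "b * b = 1" using ab by auto
    have facts: "A 1 i = a" "A i 1 = a" "A 1 j = b" "A j 1 = b" "A j i = A i j"
      "A 1 1 = 1" "A i i = 1" "A j j = 1"
      using sym diag i j one by (auto simp: a_def b_def)
    have "(\<Sum>k\<in>{1,i,j}. \<Sum>l\<in>{1,i,j}. A k l * x k * x l) = 3 - 2 * (a * a) - 2 * (b * b) + 2 * A i j * a * b"
      using d by (simp add: x_def facts facts[simplified] aa algebra_simps)
    with le0 have le: "0 \<le> 3 - 2 * (a * a) - 2 * (b * b) + 2 * A i j * a * b" by simp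
    from ab show False using le ne unfolding a_def[symmetric] b_def[symmetric] by auto
  qed
  define b where "b = (\<lambda>i. A 1 i)"
  have prod: "A i j = b i * b j" if i: "i \<in> {1..n}" and j: "j \<in> {1..n}" for i j
  proof -
    have one: "1 \<in> {1..n}" using i by auto
    have bi: "b i \<in> {1,-1}" "b j \<in> {1,-1}" using entries i j one by (auto simp: b_def)
    have b1: "b 1 = 1" using diag one by (simp add: b_def)
    show ?thesis
    proof (cases "i = j")
      case True then show ?thesis using diag i bi by auto
    next
      case False
      show ?thesis
      proof (cases "i = 1")
        case True then show ?thesis using b1 by (simp add: b_def)
      next
        case i1: False
        show ?thesis
        proof (cases "j = 1")
          case True then show ?thesis using b1 sym i one by (simp add: b_def)
        next
          case False then show ?thesis using tri[OF i j i1 False] \<open>i \<noteq> j\<close> by (simp add: b_def)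
        qed
      qed
    qed
  qed
  show "\<exists>b :: nat \<Rightarrow> real. (\<forall>i\<in>{1..n}. b i \<in> {1, -1}) \<and>
            (\<forall>x :: nat \<Rightarrow> real. quadE n A x = (\<Sum>i=1..n. b i * x i)\<^sup>2)"
  proof (intro exI conjI allI ballI)
    fix i assume "i \<in> {1..n}" then show "b i \<in> {1,-1}" using entries by (auto simp: b_def)
  next
    fix x :: "nat \<Rightarrow> real"
    have "quadE n A x = (\<Sum>i\<in>{1..n}. \<Sum>j\<in>{1..n}. (b i * x i) * (b j * x j))"
      unfolding quadE_full[OF sym] by (intro sum.cong refl) (simp add: prod mult_ac)
    also have "\<dots> = (\<Sum>i=1..n. b i * x i)\<^sup>2"
      by (simp add: power2_eq_square sum_product)
    finally show "quadE n A x = (\<Sum>i=1..n. b i * x i)\<^sup>2" .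
  qed
qed

end
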